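(* Let $\bar\lambda\in(0,\infty)^k$ be a tuning parameter satisfying $\bar\lambda_j/(2g'(\|Y-X\hat\beta^{\bar\lambda}\|_2^2))=\|(XP_jM_j^{+})^\top\varepsilon\|_{q_j}^*$ for all $j$, and let $\bar\beta:=\hat\beta^{\bar\lambda}$. Then, with probability one, $$\frac1n\|X(\beta^*-\bar\beta)\|_2^2\le\min_{\beta\in\mathbb{R}^p}\Big\{\frac1n\|X(\beta^*-\beta)\|_2^2+\frac4n\sum_{j=1}^k\|(XP_jM_j^{+})^\top\varepsilon\|_{q_j}^*\,\|M_j\beta\|_{q_j}\Big\}.$$
   Context: Standing setup. Model: $Y=X\beta^*+\varepsilon$ with $Y\in\mathbb{R}^n$, $X\in\mathbb{R}^{n\times p}$, $\beta^*\in\mathbb{R}^p$, $\varepsilon\in\mathbb{R}^n$ (random). Link function $g:\mathbb{R}\to[0,\infty)$ with $g(0)=0$, $g$ continuous and strictly increasing on $[0,\infty)$, continuously differentiable on $(0,\infty)$ with strictly positive and non-increasing derivative $g'$, and such that $\alpha\mapsto g(\|\alpha\|_2^2)$ is strictly convex on $\mathbb{R}^n$. Penalty: $k\ge1$, matrices $M_1,\dots,M_k\in\mathbb{R}^{p\times p}$ with $\bigcap_{j=1}^k\mathrm{Ker}(M_j)=\{0\}$, exponents $q_j\ge1$, $\|\cdot\|_{q_j}$ the $\ell_{q_j}$-norm on $\mathbb{R}^p$, and $\|\cdot\|_{q_j}^*$ its dual norm. For $\lambda\in(0,\infty)^k$, $\hat\beta^\lambda$ denotes any element of $\arg\min_{\beta\in\mathbb{R}^p}\{g(\|Y-X\beta\|_2^2)+\sum_{j=1}^k\lambda_j\|M_j\beta\|_{q_j}\}$.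 $A^+$ denotes the Moore–Penrose pseudoinverse; $P_1,\dots,P_k\in\mathbb{R}^{p\times p}$ are fixed projection matrices with $\sum_{j=1}^kP_jM_j^+M_j=I_{p\times p}$. Noise assumption: with probability one, $Y\neq0$ and $\min_{j}\|(XP_jM_j^{+})^\top\varepsilon\|_{q_j}^*>0$. *)

theory Defs
  imports "HOL-Analysis.Analysis"
begin

definition strictly_convex_on :: "'a::real_vector set \<Rightarrow> ('a \<Rightarrow> real) \<Rightarrow> bool" where
  "strictly_convex_on S f \<longleftrightarrow>
     (\<forall>x\<in>S. \<forall>y\<in>S. \<forall>t::real. x \<noteq> y \<and> 0 < t \<and> t < 1 \<longrightarrow>
        f ((1 - t) *\<^sub>R x + t *\<^sub>R y) < (1 - t) * f x + t * f y)"

definition pinv :: "real^'n^'m \<Rightarrow> real^'m^'n" where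
  "pinv A = (THE B. A ** B ** A = A \<and> B ** A ** B = B \<and>
                   transpose (A ** B) = A ** B \<and> transpose (B ** A) = B ** A)"

definition lq_norm :: "real \<Rightarrow> real^'p \<Rightarrow> real" where
  "lq_norm q x = (\<Sum>i\<in>UNIV. \<bar>x $ i\<bar> powr q) powr (1 / q)"

definition dual_norm :: "(real^'p \<Rightarrow> real) \<Rightarrow> real^'p \<Rightarrow> real" where
  "dual_norm N v = Sup {v \<bullet> x | x. N x \<le> 1}"

definition objective ::
  "(real \<Rightarrow> real) \<Rightarrow> real^'p^'n \<Rightarrow> real^'n \<Rightarrow> nat \<Rightarrow> (nat \<Rightarrow> real^'p^'p)
     \<Rightarrow> (nat \<Rightarrow> real) \<Rightarrow> (nat \<Rightarrow> real) \<Rightarrow> real^'p \<Rightarrow> real" where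
  "objective g X Y k M q lam \<beta> =
     g ((norm (Y - X *v \<beta>))\<^sup>2) + (\<Sum>j\<in>{1..k}. lam j * lq_norm (q j) (M j *v \<beta>))"

end

theory Submission imports Defs begin

lemma scal_conv:
  fixes u v s q :: real
  assumes q: "q \<ge> 1" and u: "u \<ge> 0" and v: "v \<ge> 0" and s: "0 \<le> s" "s \<le> 1"
  shows "((1 - s) * u + s * v) powr q \<le> (1 - s) * u powr q + s * v powr q"
proof -
  have key: "(t * w) powr q \<le> t * w powr q" if "0 \<le> t" "t \<le> 1" "w \<ge> 0" for t w
  proof (cases "t = 0")
    case True then show ?thesis using q by simp
  next
    case False
    hence "t powr q \<le> t" using that q powr_le_one_le by auto
    moreover have "(t*w) powr q = t powr q * w powr q" using that by (simp add: powr_mult)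
    ultimately show ?thesis by (simp add: mult_right_mono)
  qed
  show ?thesis
  proof (cases "u = 0 \<or> v = 0")
    case True
    then show ?thesis
    proof
      assume "u = 0" then show ?thesis using key[of s v] s v q by simp
    next
      assume "v = 0" then show ?thesis using key[of "1-s" u] s u q by simp
    qed
  next
    case False
    hence "u > 0" "v > 0" using u v by auto
    then show ?thesis using convex_onD[OF powr_convex[OF q], of s u v] s by (simp add: algebra_simps)
  qed
qed

lemma abs_conv:
  fixes a b s q :: real
  assumes q: "q \<ge> 1" and s: "0 \<le> s" "s \<le> 1"
  shows "\<bar>(1 - s) * a + s * b\<bar> powr q \<le> (1 - s) * \<bar>a\<bar> powr q + s * \<bar>b\<bar> powr q"
proof -
  have "\<bar>(1 - s) * a + s * b\<bar> \<le> (1 - s) * \<bar>a\<bar> + s * \<bar>b\<bar>"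
  proof -
    have "\<bar>(1 - s) * a + s * b\<bar> \<le> \<bar>(1 - s) * a\<bar> + \<bar>s * b\<bar>" by (rule abs_triangle_ineq)
    also have "\<dots> = (1 - s) * \<bar>a\<bar> + s * \<bar>b\<bar>" using s by (simp add: abs_mult)
    finally show ?thesis .
  qed
  hence "\<bar>(1 - s) * a + s * b\<bar> powr q \<le> ((1 - s) * \<bar>a\<bar> + s * \<bar>b\<bar>) powr q"
    using q by (intro powr_mono2) auto
  also have "\<dots> \<le> (1 - s) * \<bar>a\<bar> powr q + s * \<bar>b\<bar> powr q"
    using scal_conv[OF q _ _ s] by simp
  finally show ?thesis .
qed

definition FF :: "real \<Rightarrow> real^'p \<Rightarrow> real" where
  "FF q x = (\<Sum>i\<in>UNIV. \<bar>x $ i\<bar> powr q)"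

lemma FF_nonneg: "FF q x \<ge> 0" unfolding FF_def by (simp add: sum_nonneg)

lemma lq_FF: "lq_norm q x = FF q x powr (1/q)" unfolding lq_norm_def FF_def ..

lemma lq_nonneg: "lq_norm q x \<ge> 0" by (simp add: lq_FF)

lemma FF_conv:
  assumes q: "q \<ge> 1" and s: "0 \<le> s" "s \<le> 1"
  shows "FF q ((1 - s) *\<^sub>R x + s *\<^sub>R y) \<le> (1 - s) * FF q x + s * FF q y"
  unfolding FF_def sum_distrib_left sum.distrib[symmetric]
  by (rule sum_mono) (use abs_conv[OF q s] in simp)

lemma FF_scale:
  assumes q: "q \<ge> 1"
  shows "FF q (c *\<^sub>R x) = \<bar>c\<bar> powr q * FF q x"
  unfolding FF_def sum_distrib_left by (simp add: abs_mult powr_mult)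

lemma lq_scale:
  assumes q: "q \<ge> 1"
  shows "lq_norm q (c *\<^sub>R x) = \<bar>c\<bar> * lq_norm q x"
proof -
  have "lq_norm q (c *\<^sub>R x) = (\<bar>c\<bar> powr q) powr (1/q) * FF q x powr (1/q)"
    by (simp add: lq_FF FF_scale[OF q] powr_mult FF_nonneg)
  also have "(\<bar>c\<bar> powr q) powr (1/q) = \<bar>c\<bar>" using q by (simp add: powr_powr)
  finally show ?thesis by (simp add: lq_FF)
qed

lemma lq_le1: "q \<ge> 1 \<Longrightarrow> lq_norm q x \<le> 1 \<longleftrightarrow> FF q x \<le> 1"
proof -
  assume q: "q \<ge> 1"
  have "FF q x powr (1/q) \<le> 1 \<longleftrightarrow> FF q x \<le> 1"
  proof
    assume "FF q x powr (1/q) \<le> 1"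
    hence "(FF q x powr (1/q)) powr q \<le> 1 powr q" using q by (intro powr_mono2) (auto)
    thus "FF q x \<le> 1" using q FF_nonneg[of q x] by (simp add: powr_powr)
  next
    assume "FF q x \<le> 1"
    thus "FF q x powr (1/q) \<le> 1" using q FF_nonneg[of q x] by (intro powr_le1) auto
  qed
  thus ?thesis by (simp add: lq_FF)
qed

lemma comp_le_lq:
  assumes q: "q \<ge> 1"
  shows "\<bar>x $ i\<bar> \<le> lq_norm q x"
proof -
  have "\<bar>x $ i\<bar> powr q \<le> FF q x" unfolding FF_def
    by (rule member_le_sum) auto
  hence "(\<bar>x $ i\<bar> powr q) powr (1/q) \<le> FF q x powr (1/q)" using q by (intro powr_mono2) auto
  thus ?thesis using q by (simp add: powr_powr lq_FF)
qed

lemma lq_zero: assumes q: "q \<ge> 1" and "lq_norm q x = 0" shows "x = 0"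
proof -
  have "\<bar>x $ i\<bar> \<le> 0" for i using comp_le_lq[OF q, of x i] assms by simp
  thus ?thesis by (simp add: vec_eq_iff)
qed

lemma lq_triangle:
  assumes q: "q \<ge> 1"
  shows "lq_norm q (x + y) \<le> lq_norm q x + lq_norm q y"
proof (cases "lq_norm q x = 0 \<or> lq_norm q y = 0")
  case True
  then show ?thesis
  proof
    assume "lq_norm q x = 0" then have "x = 0" by (rule lq_zero[OF q])
    then show ?thesis using lq_nonneg[of q x] by simp
  next
    assume "lq_norm q y = 0" then have "y = 0" by (rule lq_zero[OF q])
    then show ?thesis using lq_nonneg[of q y] by simp
  qed
next
  case False
  define a where "a = lq_norm q x"
  define b where "b = lq_norm q y"
  have a: "a > 0" and b: "b > 0" using False lq_nonneg a_def b_def by (auto simp: order_le_less)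
  have "lq_norm q ((1/a) *\<^sub>R x) = 1" using a by (simp add: lq_scale[OF q] a_def)
  hence fx: "FF q ((1/a) *\<^sub>R x) \<le> 1" using lq_le1[OF q, of "(1/a) *\<^sub>R x"] by simp
  have "lq_norm q ((1/b) *\<^sub>R y) = 1" using b by (simp add: lq_scale[OF q] b_def)
  hence fy: "FF q ((1/b) *\<^sub>R y) \<le> 1" using lq_le1[OF q, of "(1/b) *\<^sub>R y"] by simp
  define s where "s = b / (a + b)"
  have s: "0 \<le> s" "s \<le> 1" using a b by (auto simp: s_def)
  have eq: "(1 - s) *\<^sub>R ((1/a) *\<^sub>R x) + s *\<^sub>R ((1/b) *\<^sub>R y) = (1/(a+b)) *\<^sub>R (x + y)"
    using a b by (simp add: s_def field_simps scaleR_add_right)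
  have "FF q ((1/(a+b)) *\<^sub>R (x + y)) \<le> (1 - s) * 1 + s * 1"
    unfolding eq[symmetric]
    by (rule order_trans[OF FF_conv[OF q s]]) (use fx fy s in \<open>intro add_mono mult_left_mono; simp\<close>)
  hence "lq_norm q ((1/(a+b)) *\<^sub>R (x + y)) \<le> 1" using lq_le1[OF q, of "(1/(a+b)) *\<^sub>R (x + y)"] by simp
  hence "lq_norm q (x + y) / (a + b) \<le> 1" using a b by (simp add: lq_scale[OF q])
  thus ?thesis using a b by (simp add: a_def b_def)
qed

lemma lq_minus: "q \<ge> 1 \<Longrightarrow> lq_norm q (- x) = lq_norm q x"
  using lq_scale[of q "-1" x] by simp

lemma lq_diff: "q \<ge> 1 \<Longrightarrow> lq_norm q (x - y) \<le> lq_norm q x + lq_norm q y"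
  using lq_triangle[of q x "-y"] lq_minus[of q y] by simp

lemma lq_conv:
  assumes q: "q \<ge> 1" and t: "0 \<le> t" "t \<le> 1"
  shows "lq_norm q ((1 - t) *\<^sub>R x + t *\<^sub>R y) \<le> (1 - t) * lq_norm q x + t * lq_norm q y"
  using lq_triangle[OF q, of "(1 - t) *\<^sub>R x" "t *\<^sub>R y"] t by (simp add: lq_scale[OF q])

lemma dual_bound:
  assumes q: "q \<ge> 1"
  shows "v \<bullet> x \<le> dual_norm (lq_norm q) v * lq_norm q x"
proof -
  let ?S = "{v \<bullet> x | x. lq_norm q x \<le> 1}"
  have bdd: "bdd_above ?S"
  proof (rule bdd_aboveI)
    fix z assume "z \<in> ?S"
    then obtain x where z: "z = v \<bullet> x" and x: "lq_norm q x \<le> 1" by auto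
    have "z = (\<Sum>i\<in>UNIV. v $ i * x $ i)" by (simp add: z inner_vec_def)
    also have "\<dots> \<le> (\<Sum>i\<in>UNIV. \<bar>v $ i\<bar>)"
    proof (rule sum_mono)
      fix i
      have "\<bar>x $ i\<bar> \<le> 1" using comp_le_lq[OF q, of x i] x by simp
      hence "\<bar>v $ i * x $ i\<bar> \<le> \<bar>v $ i\<bar>" by (simp add: abs_mult mult_left_le)
      thus "v $ i * x $ i \<le> \<bar>v $ i\<bar>" by simp
    qed
    finally show "z \<le> (\<Sum>i\<in>UNIV. \<bar>v $ i\<bar>)" .
  qed
  have mem: "v \<bullet> y \<le> dual_norm (lq_norm q) v" if "lq_norm q y \<le> 1" for y
    unfolding dual_norm_def by (rule cSup_upper[OF _ bdd]) (use that in auto)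
  show ?thesis
  proof (cases "lq_norm q x = 0")
    case True
    then have "x = 0" by (rule lq_zero[OF q])
    moreover have "lq_norm q (0::real^'a) = 0" by (simp add: lq_norm_def)
    ultimately show ?thesis using mem[of 0] by simp
  next
    case False
    define a where "a = lq_norm q x"
    have a: "a > 0" using False lq_nonneg a_def by (auto simp: order_le_less)
    have "lq_norm q ((1/a) *\<^sub>R x) \<le> 1" using a by (simp add: lq_scale[OF q] a_def)
    hence "v \<bullet> ((1/a) *\<^sub>R x) \<le> dual_norm (lq_norm q) v" by (rule mem)
    hence "(v \<bullet> x) / a \<le> dual_norm (lq_norm q) v" by simp
    thus ?thesis using a by (simp add: a_def divide_le_eq mult.commute)
  qed
qed

lemma dual_bound_abs:
  assumes q: "q \<ge> 1"
  shows "- (v \<bullet> x) \<le> dual_norm (lq_norm q) v * lq_norm q x"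
  using dual_bound[OF q, of v "-x"] lq_minus[OF q, of x] by simp

lemma deriv_lb:
  fixes h :: "real \<Rightarrow> real"
  assumes d: "(h has_real_derivative D) (at 0)"
    and lb: "\<And>t. 0 < t \<Longrightarrow> t \<le> 1 \<Longrightarrow> c \<le> (h t - h 0) / t"
  shows "c \<le> D"
proof -
  have lim0: "((\<lambda>t. (h t - h 0) / t) \<longlongrightarrow> D) (at 0)" using d by (simp add: DERIV_def)
  have lim: "((\<lambda>t. (h t - h 0) / t) \<longlongrightarrow> D) (at_right 0)"
    by (rule tendsto_mono[OF at_le[OF subset_UNIV] lim0])
  have ev: "eventually (\<lambda>t. c \<le> (h t - h 0) / t) (at_right (0::real))"
    using eventually_at_right_real[OF zero_less_one] by eventually_elim (auto intro: lb)
  show ?thesis by (rule tendsto_lowerbound[OF lim ev]) simp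
qed

lemma sum_mat_vec:
  fixes f :: "'i \<Rightarrow> real^'n^'m"
  assumes "finite S"
  shows "(sum f S) *v x = (\<Sum>j\<in>S. f j *v x)"
  using assms by (induction S rule: finite_induct) (auto simp: matrix_vector_mult_add_rdistrib)

lemma mat_vec_sum:
  fixes A :: "real^'n^'m"
  assumes "finite S"
  shows "A *v (\<Sum>j\<in>S. f j) = (\<Sum>j\<in>S. A *v f j)"
  using assms by (induction S rule: finite_induct) (auto simp: matrix_vector_right_distrib)

lemma inner_mat: "(e::real^'n) \<bullet> ((A::real^'p^'n) *v u) = (transpose A *v e) \<bullet> u"
  by (simp add: dot_lmul_matrix)

lemma norm_sq_line: "(norm ((r::real^'n) - t *\<^sub>R w))\<^sup>2 = r \<bullet> r - 2 * t * (r \<bullet> w) + t\<^sup>2 * (w \<bullet> w)"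
  unfolding power2_norm_eq_inner by (simp add: inner_diff_left inner_diff_right inner_commute power2_eq_square algebra_simps)

theorem mainTheorem6:
  fixes X :: "real^'p^'n" and Y \<epsilon> :: "real^'n" and \<beta>star :: "real^'p"
    and g g' :: "real \<Rightarrow> real" and k :: nat
    and M P :: "nat \<Rightarrow> real^'p^'p" and q :: "nat \<Rightarrow> real"
    and lam :: "nat \<Rightarrow> real" and \<beta>bar :: "real^'p"
  assumes model: "Y = X *v \<beta>star + \<epsilon>"
    and g_nonneg: "\<And>t. g t \<ge> 0"
    and g0: "g 0 = 0"
    and g_cont: "continuous_on {0..} g"
    and g_mono: "strict_mono_on {0..} g"
    and g_deriv: "\<And>t. t > 0 \<Longrightarrow> (g has_real_derivative g' t) (at t)"
    and g'_cont: "continuous_on {0<..} g'"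
    and g'_pos: "\<And>t. t > 0 \<Longrightarrow> g' t > 0"
    and g'_antimono: "\<And>s t. 0 < s \<Longrightarrow> s \<le> t \<Longrightarrow> g' t \<le> g' s"
    and g_sconv: "strictly_convex_on UNIV (\<lambda>\<alpha>::real^'n. g ((norm \<alpha>)\<^sup>2))"
    and k_pos: "k \<ge> 1"
    and ker: "\<And>\<beta>. (\<forall>j\<in>{1..k}. M j *v \<beta> = 0) \<Longrightarrow> \<beta> = 0"
    and q_ge: "\<And>j. j \<in> {1..k} \<Longrightarrow> q j \<ge> 1"
    and P_proj: "\<And>j. j \<in> {1..k} \<Longrightarrow> P j ** P j = P j"
    and P_sum: "(\<Sum>j\<in>{1..k}. P j ** pinv (M j) ** M j) = mat 1"
    and Y_nz: "Y \<noteq> 0"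
    and noise: "\<And>j. j \<in> {1..k} \<Longrightarrow>
       dual_norm (lq_norm (q j)) (transpose (X ** P j ** pinv (M j)) *v \<epsilon>) > 0"
    and lam_pos: "\<And>j. j \<in> {1..k} \<Longrightarrow> lam j > 0"
    and bar_min: "\<And>\<beta>. objective g X Y k M q lam \<beta>bar \<le> objective g X Y k M q lam \<beta>"
    and resid_pos: "(norm (Y - X *v \<beta>bar))\<^sup>2 > 0"
    and lam_choice: "\<And>j. j \<in> {1..k} \<Longrightarrow>
       lam j / (2 * g' ((norm (Y - X *v \<beta>bar))\<^sup>2))
         = dual_norm (lq_norm (q j)) (transpose (X ** P j ** pinv (M j)) *v \<epsilon>)"
  shows "(1 / real CARD('n)) * (norm (X *v (\<beta>star - \<beta>bar)))\<^sup>2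
     \<le> (INF \<beta>. (1 / real CARD('n)) * (norm (X *v (\<beta>star - \<beta>)))\<^sup>2
          + (4 / real CARD('n)) * (\<Sum>j\<in>{1..k}.
              dual_norm (lq_norm (q j)) (transpose (X ** P j ** pinv (M j)) *v \<epsilon>)
              * lq_norm (q j) (M j *v \<beta>)))"
proof (rule cINF_greatest)
  show "UNIV \<noteq> {}" by simp
  fix \<beta> :: "real^'p"
  define D where "D j = dual_norm (lq_norm (q j)) (transpose (X ** P j ** pinv (M j)) *v \<epsilon>)" for j
  define r where "r = Y - X *v \<beta>bar"
  define s0 where "s0 = (norm r)\<^sup>2"
  define \<Delta> where "\<Delta> = \<beta> - \<beta>bar"
  define w where "w = X *v \<Delta>"
  define l0 where "l0 j = lq_norm (q j) (M j *v \<beta>bar)" for j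
  define l1 where "l1 j = lq_norm (q j) (M j *v \<beta>)" for j
  define h where "h t = g ((norm (r - t *\<^sub>R w))\<^sup>2)" for t
  have s0: "s0 > 0" using resid_pos by (simp add: s0_def r_def)
  have g's0: "g' s0 > 0" using g'_pos[OF s0] .
  have D_nn: "D j \<ge> 0" if "j \<in> {1..k}" for j using noise[OF that] by (simp add: D_def)
  have lam_eq: "lam j = 2 * g' s0 * D j" if "j \<in> {1..k}" for j
    using lam_choice[OF that] g's0 by (simp add: D_def s0_def r_def field_simps)
  (* first-order condition *)
  have dh: "(h has_real_derivative g' s0 * (- 2 * (r \<bullet> w))) (at 0)"
  proof -
    have e: "h = (\<lambda>t. g (r \<bullet> r - 2 * t * (r \<bullet> w) + t\<^sup>2 * (w \<bullet> w)))"
      by (rule ext) (simp add: h_def norm_sq_line)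
    have inner: "((\<lambda>t::real. r \<bullet> r - 2 * t * (r \<bullet> w) + t\<^sup>2 * (w \<bullet> w)) has_real_derivative - 2 * (r \<bullet> w)) (at 0)"
      by (rule derivative_eq_intros | simp)+
    have "r \<bullet> r - 2 * 0 * (r \<bullet> w) + 0\<^sup>2 * (w \<bullet> w) = s0" by (simp add: s0_def power2_norm_eq_inner)
    hence gd: "(g has_real_derivative g' s0) (at (r \<bullet> r - 2 * 0 * (r \<bullet> w) + 0\<^sup>2 * (w \<bullet> w)))"
      using g_deriv[OF s0] by simp
    show ?thesis unfolding e by (rule DERIV_chain2[OF gd inner])
  qed
  have lb: "(\<Sum>j\<in>{1..k}. lam j * l0 j) - (\<Sum>j\<in>{1..k}. lam j * l1 j) \<le> (h t - h 0) / t"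
    if t: "0 < t" "t \<le> 1" for t
  proof -
    have bt: "\<beta>bar + t *\<^sub>R \<Delta> = (1 - t) *\<^sub>R \<beta>bar + t *\<^sub>R \<beta>"
      by (simp add: \<Delta>_def algebra_simps)
    have res: "Y - X *v (\<beta>bar + t *\<^sub>R \<Delta>) = r - t *\<^sub>R w"
      by (simp add: r_def w_def algebra_simps)
    have pen: "lam j * lq_norm (q j) (M j *v (\<beta>bar + t *\<^sub>R \<Delta>)) \<le> lam j * ((1 - t) * l0 j + t * l1 j)"
      if j: "j \<in> {1..k}" for j
    proof -
      have "M j *v (\<beta>bar + t *\<^sub>R \<Delta>) = (1 - t) *\<^sub>R (M j *v \<beta>bar) + t *\<^sub>R (M j *v \<beta>)"
        unfolding bt by (simp add: matrix_vector_right_distrib matrix_vector_mult_scaleR)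
      thus ?thesis using lq_conv[OF q_ge[OF j], of t "M j *v \<beta>bar" "M j *v \<beta>"] t lam_pos[OF j]
        by (simp add: l0_def l1_def mult_left_mono)
    qed
    have "h 0 + (\<Sum>j\<in>{1..k}. lam j * l0 j) \<le> objective g X Y k M q lam (\<beta>bar + t *\<^sub>R \<Delta>)"
      using bar_min[of "\<beta>bar + t *\<^sub>R \<Delta>"] by (simp add: objective_def h_def r_def l0_def)
    also have "\<dots> \<le> h t + (\<Sum>j\<in>{1..k}. lam j * ((1 - t) * l0 j + t * l1 j))"
      unfolding objective_def res h_def by (intro add_left_mono sum_mono pen)
    also have "(\<Sum>j\<in>{1..k}. lam j * ((1 - t) * l0 j + t * l1 j))
        = (\<Sum>j\<in>{1..k}. lam j * l0 j - t * (lam j * l0 j - lam j * l1 j))"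
      by (rule sum.cong) (simp_all add: algebra_simps)
    also have "\<dots> = (\<Sum>j\<in>{1..k}. lam j * l0 j) - t * ((\<Sum>j\<in>{1..k}. lam j * l0 j) - (\<Sum>j\<in>{1..k}. lam j * l1 j))"
      by (simp only: sum_subtractf sum_distrib_left right_diff_distrib)
    finally have "t * ((\<Sum>j\<in>{1..k}. lam j * l0 j) - (\<Sum>j\<in>{1..k}. lam j * l1 j)) \<le> h t - h 0" by simp
    thus ?thesis using t by (simp add: le_divide_eq mult.commute)
  qed
  have foc: "(\<Sum>j\<in>{1..k}. lam j * l0 j) - (\<Sum>j\<in>{1..k}. lam j * l1 j) \<le> g' s0 * (- 2 * (r \<bullet> w))"
    by (rule deriv_lb[OF dh lb])
  have "(\<Sum>j\<in>{1..k}. lam j * l1 j) - (\<Sum>j\<in>{1..k}. lam j * l0 j) = 2 * g' s0 * (\<Sum>j\<in>{1..k}. D j * (l1 j - l0 j))"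
  proof -
    have "(\<Sum>j\<in>{1..k}. lam j * l1 j) - (\<Sum>j\<in>{1..k}. lam j * l0 j) = (\<Sum>j\<in>{1..k}. lam j * l1 j - lam j * l0 j)"
      by (simp only: sum_subtractf)
    also have "\<dots> = (\<Sum>j\<in>{1..k}. 2 * g' s0 * (D j * (l1 j - l0 j)))"
      by (rule sum.cong) (simp_all add: lam_eq algebra_simps)
    also have "\<dots> = 2 * g' s0 * (\<Sum>j\<in>{1..k}. D j * (l1 j - l0 j))"
      by (simp only: sum_distrib_left)
    finally show ?thesis .
  qed
  moreover have "g' s0 * (- 2 * (r \<bullet> w)) = - (2 * g' s0 * (r \<bullet> w))" by simp
  ultimately have "2 * g' s0 * (r \<bullet> w) \<le> 2 * g' s0 * (\<Sum>j\<in>{1..k}. D j * (l1 j - l0 j))"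
    using foc by linarith
  hence rw: "r \<bullet> w \<le> (\<Sum>j\<in>{1..k}. D j * (l1 j - l0 j))"
    using g's0 by (simp add: mult_le_cancel_left_pos)
  have wsum: "w = (\<Sum>j\<in>{1..k}. (X ** P j ** pinv (M j)) *v (M j *v \<Delta>))"
  proof -
    have "w = X *v ((\<Sum>j\<in>{1..k}. P j ** pinv (M j) ** M j) *v \<Delta>)" by (simp only: w_def P_sum matrix_vector_mul_lid)
    also have "\<dots> = (\<Sum>j\<in>{1..k}. X *v ((P j ** pinv (M j) ** M j) *v \<Delta>))"
      by (simp add: sum_mat_vec mat_vec_sum)
    also have "\<dots> = (\<Sum>j\<in>{1..k}. (X ** P j ** pinv (M j)) *v (M j *v \<Delta>))"
      by (simp add: matrix_vector_mul_assoc matrix_mul_assoc)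
    finally show ?thesis .
  qed
  have ew: "- (\<Sum>j\<in>{1..k}. D j * (l1 j + l0 j)) \<le> \<epsilon> \<bullet> w"
  proof -
    have "\<epsilon> \<bullet> w = (\<Sum>j\<in>{1..k}. (transpose (X ** P j ** pinv (M j)) *v \<epsilon>) \<bullet> (M j *v \<Delta>))"
      unfolding wsum by (simp add: inner_sum_right inner_mat)
    moreover have "- (D j * (l1 j + l0 j)) \<le> (transpose (X ** P j ** pinv (M j)) *v \<epsilon>) \<bullet> (M j *v \<Delta>)"
      if j: "j \<in> {1..k}" for j
    proof -
      have h1: "- ((transpose (X ** P j ** pinv (M j)) *v \<epsilon>) \<bullet> (M j *v \<Delta>)) \<le> D j * lq_norm (q j) (M j *v \<Delta>)"
        unfolding D_def by (rule dual_bound_abs[OF q_ge[OF j]])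
      have "lq_norm (q j) (M j *v \<Delta>) \<le> l1 j + l0 j"
        unfolding \<Delta>_def l1_def l0_def matrix_vector_mult_diff_distrib by (rule lq_diff[OF q_ge[OF j]])
      hence "D j * lq_norm (q j) (M j *v \<Delta>) \<le> D j * (l1 j + l0 j)" using D_nn[OF j] by (rule mult_left_mono)
      with h1 show ?thesis by linarith
    qed
    ultimately show ?thesis
      by (simp add: sum_negf[symmetric]) (rule sum_mono, simp)
  qed
  define a where "a = X *v (\<beta>star - \<beta>bar)"
  define b where "b = X *v (\<beta>star - \<beta>)"
  have ra: "r = a + \<epsilon>" by (simp add: r_def a_def model algebra_simps)
  have wab: "w = a - b" by (simp add: w_def a_def b_def \<Delta>_def algebra_simps)
  have "a \<bullet> (a - b) = r \<bullet> w - \<epsilon> \<bullet> w" by (simp add: ra wab inner_add_left)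
  also have "\<dots> \<le> (\<Sum>j\<in>{1..k}. D j * (l1 j - l0 j)) + (\<Sum>j\<in>{1..k}. D j * (l1 j + l0 j))"
    using rw ew by linarith
  also have "\<dots> = 2 * (\<Sum>j\<in>{1..k}. D j * l1 j)"
  proof -
    have "(\<Sum>j\<in>{1..k}. D j * (l1 j - l0 j)) + (\<Sum>j\<in>{1..k}. D j * (l1 j + l0 j)) = (\<Sum>j\<in>{1..k}. 2 * (D j * l1 j))"
      by (simp only: sum.distrib[symmetric]) (rule sum.cong, simp_all add: algebra_simps)
    thus ?thesis by (simp only: sum_distrib_left)
  qed
  finally have aab: "a \<bullet> (a - b) \<le> 2 * (\<Sum>j\<in>{1..k}. D j * l1 j)" .
  have id: "2 * (a \<bullet> (a - b)) = a \<bullet> a - b \<bullet> b + (a - b) \<bullet> (a - b)"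
    by (simp add: inner_diff_left inner_diff_right inner_commute algebra_simps)
  have nn: "(a - b) \<bullet> (a - b) \<ge> 0" by simp
  have main: "(norm a)\<^sup>2 \<le> (norm b)\<^sup>2 + 4 * (\<Sum>j\<in>{1..k}. D j * l1 j)"
    using id aab nn unfolding power2_norm_eq_inner by linarith
  have n: "(1 / real CARD('n)) \<ge> 0" by simp
  show "(1 / real CARD('n)) * (norm (X *v (\<beta>star - \<beta>bar)))\<^sup>2
     \<le> (1 / real CARD('n)) * (norm (X *v (\<beta>star - \<beta>)))\<^sup>2
          + (4 / real CARD('n)) * (\<Sum>j\<in>{1..k}.
              dual_norm (lq_norm (q j)) (transpose (X ** P j ** pinv (M j)) *v \<epsilon>)
              * lq_norm (q j) (M j *v \<beta>))"
  proof -
    have "(1 / real CARD('n)) * (norm a)\<^sup>2 \<le> (1 / real CARD('n)) * ((norm b)\<^sup>2 + 4 * (\<Sum>j\<in>{1..k}. D j * l1 j))"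
      by (rule mult_left_mono[OF main n])
    also have "\<dots> = (1 / real CARD('n)) * (norm b)\<^sup>2 + (4 / real CARD('n)) * (\<Sum>j\<in>{1..k}. D j * l1 j)"
      by (simp add: distrib_left)
    finally show ?thesis unfolding a_def b_def D_def l1_def .
  qed
qed

end
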